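(* For an integer $n\ge 1$, let $d_n$ be the smallest constant such that $$\sum_{k=1}^{n}\Big(\frac{1}{k}\sum_{j=1}^{k}a_j\Big)^2\leq d_n\sum_{k=1}^{n}a_k^2\qquad\text{for all }(a_1,\ldots,a_n)\in\mathbb{R}^n.$$ Then for every $n\ge 3$, $$4\Big(1-\frac{4}{\ln n+4}\Big)\le d_n\le 4\Big(1-\frac{8}{(\ln n+4)^2}\Big).$$ *)

theory Defs
  imports Complex_Main
begin

text \<open>The set of admissible constants d in the discrete Hardy inequality of length n,
  vectors (a_1,...,a_n) represented by functions nat => real (only indices 1..n matter).\<close>
definition hardy_admissible :: "nat \<Rightarrow> real set" where
  "hardy_admissible n = {d. \<forall>a :: nat \<Rightarrow> real.
      (\<Sum>k=1..n. ((1 / real k) * (\<Sum>j=1..k. a j))^2) \<le> d * (\<Sum>k=1..n. (a k)^2)}"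

definition hardy_const :: "nat \<Rightarrow> real" where
  "hardy_const n = (LEAST d. d \<in> hardy_admissible n)"

end

theory Submission
  imports Defs
begin


lemma ln_lower2:
  fixes x :: real assumes "0 \<le> x"
  shows "2 * x / (2 + x) \<le> ln (1 + x)"
proof -
  have "(\<lambda>z. ln (1+z) - 2*z/(2+z)) 0 \<le> (\<lambda>z. ln (1+z) - 2*z/(2+z)) x"
  proof (rule DERIV_nonneg_imp_nondecreasing[OF assms])
    fix z :: real assume z: "0 \<le> z" "z \<le> x"
    have "DERIV (\<lambda>z. ln (1+z) - 2*z/(2+z)) z :> (1/(1+z) - 4/(2+z)^2)"
      using z by (auto intro!: derivative_eq_intros simp: field_simps power2_eq_square)
    moreover have "1/(1+z) - 4/(2+z)^2 \<ge> 0"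
    proof -
      have "4*(1+z) \<le> (2+z)^2" by (simp add: power2_eq_square algebra_simps)
      hence "4/(2+z)^2 \<le> 1/(1+z)" using z by (simp add: divide_simps)
      thus ?thesis by simp
    qed
    ultimately show "\<exists>y. DERIV (\<lambda>z. ln (1+z) - 2*z/(2+z)) z :> y \<and> y \<ge> 0" by blast
  qed
  then show ?thesis by simp
qed

lemma delta_bound:
  fixes j :: real assumes "1 \<le> j"
  shows "1 / sqrt (j*(j+1)) \<le> 2/(2*j+1) + 1/(8*(j*(j+1)))"
proof -
  define w where "w = sqrt (j*(j+1))"
  define p where "p = 2*j+1"
  have w2: "w^2 = j*(j+1)" unfolding w_def using assms by simp
  have w1: "w \<ge> 1" unfolding w_def using assms mult_mono[of 1 j 1 "j+1"] by (simp add: real_le_rsqrt)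
  have p2: "p^2 = 4*w^2 + 1" unfolding p_def w2 by (simp add: power2_eq_square algebra_simps)
  have pp: "p > 2*w"
  proof -
    have "(2*w)^2 < p^2" using p2 by (simp add: power2_eq_square)
    then show ?thesis using p_def assms by (smt (verit) power2_le_imp_le)
  qed
  have "(p - 2*w)*(p+2*w) = 1" using p2 by (simp add: power2_eq_square algebra_simps)
  hence e: "p - 2*w = 1/(p+2*w)" using pp w1 by (simp add: field_simps)
  have "8*w*(p-2*w) = 8*w/(p+2*w)" using e by simp
  also have "\<dots> \<le> 8*w/(4*w)" using pp w1 by (intro divide_left_mono) auto
  also have "\<dots> = 2" using w1 by simp
  finally have "8*w*(p-2*w) \<le> 2" .
  hence key: "8*w*p \<le> 16*w^2 + p" using p_def assms by (simp add: power2_eq_square algebra_simps)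
  have "1/w \<le> 2/p + 1/(8*w^2)"
    using key w1 pp by (simp add: field_simps power2_eq_square)
  then show ?thesis unfolding w_def p_def using w2 w_def by simp
qed

lemma sum_delta:
  "(\<Sum>j=1..n. 1 / sqrt (real j * (real j + 1))) \<le> ln (real n + 1) + 1/8 - 1/(8*(real n+1))"
proof (induction n)
  case 0
  then show ?case by simp
next
  case (Suc n)
  define m where "m = real n + 1"
  have m1: "m \<ge> 1" unfolding m_def by simp
  have d: "1 / sqrt (real (Suc n) * (real (Suc n) + 1)) \<le> 2/(2*m+1) + 1/(8*(m*(m+1)))"
    using delta_bound[OF m1] by (simp add: m_def ac_simps)
  have l: "ln (m+1) = ln m + ln (1 + 1/m)"
  proof -
    have eq1: "m * (1 + 1/m) = m + 1" using m1 by (simp add: field_simps)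
    have "ln (m * (1+1/m)) = ln m + ln (1+1/m)" by (rule ln_mult_pos) (use m1 in \<open>auto intro: add_pos_nonneg\<close>)
    thus ?thesis using eq1 by simp
  qed
  have "2*(1/m)/(2+1/m) \<le> ln (1 + 1/m)" using m1 by (intro ln_lower2) simp
  moreover have "2*(1/m)/(2+1/m) = 2/(2*m+1)" using m1 by (simp add: field_simps)
  ultimately have l2: "2/(2*m+1) \<le> ln (m+1) - ln m" using l by simp
  have e: "1/(8*m) - 1/(8*(m+1)) = 1/(8*(m*(m+1)))" using m1 by (simp add: field_simps)
  have "(\<Sum>j=1..Suc n. 1 / sqrt (real j * (real j + 1))) =
     (\<Sum>j=1..n. 1 / sqrt (real j * (real j + 1))) + 1 / sqrt (real (Suc n) * (real (Suc n) + 1))"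
    by simp
  also have "\<dots> \<le> ln m + 1/8 - 1/(8*m) + (2/(2*m+1) + 1/(8*(m*(m+1))))"
    using Suc.IH d unfolding m_def by linarith
  also have "\<dots> \<le> ln (m+1) + 1/8 - 1/(8*(m+1))" using l2 e by linarith
  finally show ?case unfolding m_def by simp
qed

lemma second_diff:
  fixes k :: real assumes k: "1 \<le> k"
  shows "(2*sqrt k - sqrt (k-1) - sqrt (k+1)) * sqrt k ^ 3 \<ge> 1/4"
proof -
  define a b c where "a = sqrt (k-1)" and "b = sqrt k" and "c = sqrt (k+1)"
  have b0: "b > 0" and b2: "b^2 = k" unfolding b_def using k by auto
  have a0: "a \<ge> 0" and a2: "a^2 = k - 1" unfolding a_def using k by auto
  have c0: "c \<ge> 0" and c2: "c^2 = k + 1" unfolding c_def using k by auto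
  have ac: "a*c = sqrt (k^2 - 1)" unfolding a_def c_def using k
    by (simp add: real_sqrt_mult[symmetric] power2_eq_square algebra_simps)
  have kk: "k*k \<ge> 1" using k mult_mono[of 1 k 1 k] by simp
  have z0: "2*k - 1/k \<ge> 0" using k kk by (simp add: field_simps)
  have "(2*sqrt (k^2-1))^2 = 4*k^2 - 4" using k kk by (simp add: power_mult_distrib)
  also have "\<dots> \<le> (2*k - 1/k)^2" using k by (simp add: power2_eq_square field_simps)
  finally have "2*sqrt (k^2-1) \<le> 2*k - 1/k" using z0 by (rule power2_le_imp_le)
  hence ac2: "(a+c)^2 \<le> 4*k - 1/k" using a2 c2 ac by (simp add: power2_eq_square algebra_simps)
  have bb: "b^3 * b = k^2" using b2 by (simp add: power2_eq_square power3_eq_cube)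
  have "(2*b - 1/(4*b^3))^2 = 4*b^2 - 1/b^2 + 1/(16*b^6)" using b0
    by (simp add: power2_eq_square field_simps power3_eq_cube numeral_eq_Suc)
  also have "\<dots> = 4*k - 1/k + 1/(16*b^6)" using b2 by simp
  finally have "(a+c)^2 \<le> (2*b - 1/(4*b^3))^2" using ac2 b0 by (smt (verit) divide_nonneg_nonneg zero_le_power)
  moreover have "2*b - 1/(4*b^3) \<ge> 0"
  proof -
    have "b \<ge> 1" using k unfolding b_def by simp
    hence "b^3 \<ge> 1" by simp
    hence "1/(4*b^3) \<le> 1/4" using b0 by (intro divide_left_mono) auto
    thus ?thesis using \<open>b \<ge> 1\<close> by linarith
  qed
  ultimately have "a + c \<le> 2*b - 1/(4*b^3)" by (rule power2_le_imp_le)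
  hence "2*b - a - c \<ge> 1/(4*b^3)" by linarith
  hence "(2*b - a - c) * b^3 \<ge> 1/(4*b^3) * b^3" using b0 by (intro mult_right_mono) auto
  thus ?thesis using b0 unfolding a_def b_def c_def by simp
qed

lemma ratio_sum:
  fixes k :: real assumes k: "1 < k"
  shows "sqrt k / sqrt (k-1) + sqrt k / sqrt (k+1) \<ge> 2"
proof -
  define x y where "x = sqrt k / sqrt (k-1)" and "y = sqrt k / sqrt (k+1)"
  have x0: "x > 0" and y0: "y > 0" unfolding x_def y_def using k by auto
  have "x*y = k / sqrt (k^2-1)" unfolding x_def y_def using k
    by (simp add: real_sqrt_mult[symmetric] power2_eq_square algebra_simps)
  also have "\<dots> \<ge> 1"
  proof -
    have "sqrt (k^2-1) \<le> sqrt (k^2)" by (rule real_sqrt_le_mono) simp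
    moreover have "sqrt (k^2) = k" using k by simp
    ultimately have "sqrt (k^2-1) \<le> k" by simp
    moreover have "sqrt (k^2-1) > 0" using k by (simp add: one_less_power)
    ultimately show ?thesis by simp
  qed
  finally have xy: "x*y \<ge> 1" .
  have "y \<ge> 1/x" using xy x0 by (simp add: field_simps)
  moreover have "x + 1/x \<ge> 2"
  proof -
    have "(x-1)^2 \<ge> 0" by simp
    hence "x^2 + 1 \<ge> 2*x" by (simp add: power2_eq_square algebra_simps)
    thus ?thesis using x0 by (simp add: field_simps power2_eq_square)
  qed
  ultimately show ?thesis unfolding x_def y_def by linarith
qed

lemma pointwise:
  fixes x y p q :: real assumes "p > 0" "q > 0"
  shows "(x-y)^2 \<ge> x^2*(1 - p/q) - y^2*(q/p - 1)"
proof -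
  have "(x-y)^2 - (x^2*(1-p/q) - y^2*(q/p-1)) = (x*p - y*q)^2/(p*q)"
    using assms by (simp add: field_simps power2_eq_square)
  also have "\<dots> \<ge> 0" using assms by simp
  finally show ?thesis by simp
qed

lemma telescope:
  fixes b h :: "nat \<Rightarrow> real"
  assumes b0: "b 0 = 0" and h0: "h 0 = 0" and hp: "\<And>k. 1 \<le> k \<Longrightarrow> k \<le> m+1 \<Longrightarrow> h k > 0"
  shows "(\<Sum>k=1..m. (b k - b (k-1))^2) \<ge>
     (\<Sum>k=1..m. (b k)^2 * (2 - h (k-1)/h k - h (k+1)/h k)) + (b m)^2 * (h (m+1)/h m - 1)"
  using hp
proof (induction m)
  case 0
  then show ?case using b0 by simp
next
  case (Suc m)
  have IH: "(\<Sum>k=1..m. (b k - b (k-1))^2) \<ge>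
     (\<Sum>k=1..m. (b k)^2 * (2 - h (k-1)/h k - h (k+1)/h k)) + (b m)^2 * (h (m+1)/h m - 1)"
    using Suc.IH Suc.prems by simp
  have q: "h (Suc m) > 0" using Suc.prems by simp
  have q2: "h (Suc (Suc m)) > 0" using Suc.prems by simp
  have pw: "(b (Suc m) - b m)^2 \<ge> (b (Suc m))^2*(1 - h m/h (Suc m)) - (b m)^2*(h (Suc m)/h m - 1)"
  proof (cases "m = 0")
    case True
    then show ?thesis using b0 h0 by simp
  next
    case False
    then have "h m > 0" using Suc.prems by simp
    then show ?thesis using pointwise[OF _ q] by blast
  qed
  have e: "(b (Suc m))^2 * (2 - h m/h (Suc m) - h (Suc m + 1)/h (Suc m)) + (b (Suc m))^2 * (h (Suc m + 1)/h (Suc m) - 1)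
     = (b (Suc m))^2*(1 - h m/h (Suc m))" by (simp add: algebra_simps)
  show ?case using IH pw e by simp
qed

lemma harm_ln: "(\<Sum>k=1..n. 1 / real k) \<ge> ln (real n + 1)"
proof (induction n)
  case 0
  then show ?case by simp
next
  case (Suc n)
  define m where "m = real n + 1"
  have m1: "m \<ge> 1" unfolding m_def by simp
  have eq1: "m * (1 + 1/m) = m + 1" using m1 by (simp add: field_simps)
  have "ln (m * (1+1/m)) = ln m + ln (1+1/m)" by (rule ln_mult_pos) (use m1 in \<open>auto intro: add_pos_nonneg\<close>)
  hence l: "ln (m+1) = ln m + ln (1+1/m)" using eq1 by simp
  have "ln (1+1/m) \<le> 1/m" using m1 by (intro ln_add_one_self_le_self) simp
  hence "ln (m+1) \<le> ln m + 1/m" using l by simp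
  thus ?case using Suc.IH unfolding m_def by (simp add: add_ac)
qed



lemma interior:
  fixes k S lam t tm tp :: real
  assumes k: "k > 1" and S: "S > 0" and lam: "lam = 1/4 + 2/S^2"
   and tm: "tm = t - 1/sqrt((k-1)*k)" and tp: "tp = t + 1/sqrt(k*(k+1))"
   and g0: "0 \<le> t*(2*S-t)" and gS: "t*(2*S-t) \<le> S^2"
  shows "2*sqrt k*(t*(2*S-t)) - sqrt(k-1)*(tm*(2*S-tm)) - sqrt(k+1)*(tp*(2*S-tp))
     \<ge> lam/k^2 * (sqrt k * (t*(2*S-t)))"
proof -
  define a b c G where "a = sqrt (k-1)" and "b = sqrt k" and "c = sqrt (k+1)" and "G = t*(2*S-t)"
  have a0: "a > 0" and b0: "b > 0" and c0: "c > 0" unfolding a_def b_def c_def using k by auto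
  have b2: "b^2 = k" unfolding b_def using k by simp
  have tm': "tm = t - 1/(a*b)" unfolding tm a_def b_def using k by (simp add: real_sqrt_mult)
  have tp': "tp = t + 1/(b*c)" unfolding tp b_def c_def using k by (simp add: real_sqrt_mult)
  have id: "2*b*G - a*(tm*(2*S-tm)) - c*(tp*(2*S-tp)) = (2*b - a - c)*G + (1/b^2)*(1/a + 1/c)"
    unfolding tm' tp' G_def using a0 b0 c0 by (simp add: field_simps power2_eq_square)
  have sd: "(2*b - a - c) * b^3 \<ge> 1/4" using second_diff[of k] k unfolding a_def b_def c_def by simp
  have rs: "b/a + b/c \<ge> 2" using ratio_sum[OF k] unfolding a_def b_def c_def by simp
  have sd': "2*b - a - c \<ge> 1/(4*b^3)" using sd b0 by (simp add: field_simps)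
  have t1: "(2*b - a - c)*G \<ge> G/(4*b^3)"
    using mult_right_mono[OF sd' g0] unfolding G_def by simp
  have "(1/b^2)*(1/a + 1/c) = (b/a + b/c)/b^3" using b0 by (simp add: field_simps power2_eq_square power3_eq_cube)
  also have "\<dots> \<ge> 2/b^3" using rs b0 by (intro divide_right_mono) auto
  finally have t2: "(1/b^2)*(1/a + 1/c) \<ge> 2/b^3" .
  have "G/S^2 \<le> 1" using gS S unfolding G_def by simp
  hence "2*(G/S^2) \<le> 2" by simp
  hence t3: "2*G/(S^2*b^3) \<le> 2/b^3" using b0 by (simp add: divide_right_mono field_simps)
  have rhs: "lam/k^2 * (b*G) = G/(4*b^3) + 2*G/(S^2*b^3)"
    unfolding lam b2[symmetric] using b0 S by (simp add: field_simps power2_eq_square power3_eq_cube)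
  show ?thesis
    using id t1 t2 t3 rhs unfolding a_def[symmetric] b_def[symmetric] c_def[symmetric] G_def[symmetric]
    by linarith
qed

lemma first_step:
  fixes S lam t1 y L :: real
  assumes S: "S > 0" and lam: "lam = 1/4 + 2/S^2" and y: "y = S - t1" and y0: "0 \<le> y"
    and L0: "L \<ge> 0" and yL: "y \<le> L + 11/24" and S2: "S^2 = (L+4)^2 - 8"
  shows "2*(t1*(2*S-t1)) - sqrt 2 * ((t1 + 1/sqrt 2)*(2*S - (t1 + 1/sqrt 2))) \<ge> lam * (t1*(2*S-t1))"
proof -
  define r where "r = sqrt 2"
  have r2: "r^2 = 2" unfolding r_def by simp
  have r0: "r > 0" unfolding r_def by simp
  have "sqrt 2 \<le> sqrt ((14143/10000::real)^2)" by (rule real_sqrt_le_mono) (simp add: power2_eq_square)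
  hence rub: "r \<le> 14143/10000" unfolding r_def by simp
  have rlb: "r \<ge> 14142/10000" unfolding r_def by (rule real_le_rsqrt) (simp add: power2_eq_square)
  define Q where "Q = S^2 - y^2"
  have t1e: "t1 = S - y" using y by simp
  have E: "2*(t1*(2*S-t1)) - r * ((t1 + 1/r)*(2*S - (t1 + 1/r))) - lam * (t1*(2*S-t1))
     = (2 - r - lam)*Q - 2*y + r/2"
  proof -
    have e1: "r * ((t1 + 1/r)*(2*S - (t1 + 1/r))) = r*(t1*(2*S-t1)) + 2*(S - t1) - 1/r"
      using r0 by (simp add: field_simps power2_eq_square)
    have e2: "1/r = r/2" using r0 r2 by (simp add: field_simps power2_eq_square)
    have e3: "t1*(2*S-t1) = Q" unfolding Q_def t1e by (simp add: power2_eq_square algebra_simps)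
    have e1': "r * ((t1 + 1/r)*(2*S - (t1 + 1/r))) = r*Q + 2*y - r/2"
      using e1 e3 t1e by (simp add: e2)
    have "2*(t1*(2*S-t1)) - r * ((t1 + 1/r)*(2*S - (t1 + 1/r))) - lam * (t1*(2*S-t1))
        = 2*Q - (r*Q + 2*y - r/2) - lam*Q" by (simp only: e1' e3)
    thus ?thesis by (simp add: algebra_simps)
  qed
  have yy: "y^2 \<le> (L + 11/24)^2" using y0 yL by (intro power_mono) auto
  have Qb: "Q \<ge> 7*L + 77/10" unfolding Q_def S2 using yy L0 by (simp add: power2_eq_square algebra_simps)
  have QS: "Q \<le> S^2" unfolding Q_def by simp
  have q1: "Q/S^2 \<le> 1" using QS S by simp
  have "(2 - r - lam)*Q = (7/4 - r)*Q - 2*(Q/S^2)" unfolding lam by (simp add: algebra_simps)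
  hence A1: "(2 - r - lam)*Q \<ge> (7/4 - r)*Q - 2" using q1 by linarith
  have "(7/4 - r)*Q \<ge> (3357/10000)*(7*L + 77/10)"
    using rub Qb L0 by (intro mult_mono) auto
  moreover have "(3357/10000)*(7*L + 77/10) = 23499/10000*L + 258489/100000" by (simp add: field_simps)
  ultimately have A2: "(7/4 - r)*Q \<ge> 23499/10000*L + 258489/100000" by linarith
  have m1: "(2 - r - lam)*Q \<ge> 23499/10000*L + 2584/1000 - 2"
    using A1 A2 by linarith
  show ?thesis using E m1 rlb yL L0 unfolding r_def by linarith
qed



lemma lower_bound:
  fixes n :: nat and d :: real
  assumes n: "n \<ge> 3" and d: "d \<in> hardy_admissible n"
  shows "4 * (1 - 4 / (ln (real n) + 4)) \<le> d"
proof -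
  define P :: "nat \<Rightarrow> real" where "P k = (\<Prod>j=1..k. 2*real j/(2*real j - 1))" for k
  define B where "B k = (if k = 0 then 0 else P k)" for k
  define a where "a k = B k - B (k-1)" for k
  have PS: "P (Suc k) = P k * (2*(real k+1)/(2*(real k+1)-1))" for k
    unfolding P_def by (simp add: prod.cl_ivl_Suc)
  have Ppos: "P k > 0" for k
  proof (induction k)
    case 0 then show ?case by (simp add: P_def)
  next
    case (Suc k) then show ?case unfolding PS by (intro mult_pos_pos divide_pos_pos) auto
  qed
  have Psq: "(P k)^2 \<ge> 3*real k + 1" for k
  proof (induction k)
    case 0 then show ?case by (simp add: P_def)
  next
    case (Suc k)
    define x where "x = real k"
    have x0: "x \<ge> 0" unfolding x_def by simp
    have "(P (Suc k))^2 = (P k)^2 * (4*(x+1)^2/(2*x+1)^2)"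
      unfolding PS x_def by (simp add: power_mult_distrib power_divide power2_eq_square algebra_simps)
    also have "\<dots> \<ge> (3*x+1) * (4*(x+1)^2/(2*x+1)^2)"
      using Suc.IH unfolding x_def by (intro mult_right_mono) auto
    finally have 1: "(P (Suc k))^2 \<ge> (3*x+1) * (4*(x+1)^2/(2*x+1)^2)" .
    have x1: "(2*x+1)^2 > 0" using x0 by simp
    have id: "(3*x+1) * (4*(x+1)^2) = (3*(x+1)+1)*(2*x+1)^2 + x"
      by (simp add: power2_eq_square algebra_simps)
    have "(3*x+1) * (4*(x+1)^2/(2*x+1)^2) = ((3*(x+1)+1)*(2*x+1)^2 + x)/(2*x+1)^2"
      by (metis id times_divide_eq_right)
    also have "\<dots> = (3*(x+1)+1) + x/(2*x+1)^2" using x1 by (simp add: add_divide_distrib)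
    also have "\<dots> \<ge> 3*(x+1)+1" using x0 by simp
    finally show ?case using 1 unfolding x_def by simp
  qed
  have sumA: "(\<Sum>j=1..k. a j) = B k" for k
  proof (induction k)
    case 0 then show ?case by (simp add: B_def)
  next
    case (Suc k) then show ?case by (simp add: a_def)
  qed
  have a1: "a 1 = 2" by (simp add: a_def B_def P_def)
  have ak: "a k = P k / (2*real k)" if "k \<ge> 2" for k
  proof -
    define m where "m = k - 1"
    have m: "k = Suc m" "m \<ge> 1" using that by (auto simp: m_def)
    have e1: "P k * (2*real m+1) = P m * (2*(real m+1))" using PS[of m] m by (simp add: field_simps)
    have "a k * (2*real k) = (P k - P m) * (2*(real m+1))" using m by (simp add: a_def B_def)
    also have "\<dots> = P k + (P k * (2*real m+1) - P m * (2*(real m+1)))" by (simp add: algebra_simps)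
    also have "\<dots> = P k" using e1 by simp
    finally have "a k * (2*real k) = P k" .
    then show ?thesis using m by (simp add: field_simps)
  qed
  have asq: "(a k)^2 = (P k)^2/(4*(real k)^2) + (if k = 1 then 3 else 0)" if "k \<ge> 1" for k
  proof (cases "k = 1")
    case True then show ?thesis using a1 by (simp add: P_def)
  next
    case False then have "k \<ge> 2" using that by simp
    then show ?thesis using ak False by (simp add: power_divide power_mult_distrib)
  qed
  define F where "F = (\<Sum>k=1..n. (P k)^2/(real k)^2)"
  have LHS: "(\<Sum>k=1..n. ((1 / real k) * (\<Sum>j=1..k. a j))^2) = F"
    unfolding F_def sumA by (intro sum.cong) (auto simp: B_def power_divide)
  have RHS: "(\<Sum>k=1..n. (a k)^2) = F/4 + 3"
  proof -
    have "(\<Sum>k=1..n. (a k)^2) = (\<Sum>k=1..n. (P k)^2/(4*(real k)^2) + (if k = 1 then 3 else 0))"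
      by (intro sum.cong) (auto simp: asq)
    also have "\<dots> = (\<Sum>k=1..n. (P k)^2/(real k)^2)/4 + (\<Sum>k=1..n. (if k = 1 then 3 else 0))"
      by (simp add: sum.distrib sum_divide_distrib mult.commute)
    also have "(\<Sum>k=1..n. (if k = 1 then 3 else 0)) = (3::real)"
      using n by (simp add: sum.delta)
    finally show ?thesis unfolding F_def by simp
  qed
  have "(\<Sum>k=1..n. ((1 / real k) * (\<Sum>j=1..k. a j))^2) \<le> d * (\<Sum>k=1..n. (a k)^2)"
    using d unfolding hardy_admissible_def by blast
  hence ineq: "F \<le> d * (F/4 + 3)" using LHS RHS by simp
  define L where "L = ln (real n)"
  have L0: "L \<ge> 0" unfolding L_def using n by simp
  have FL: "F \<ge> 3 * L"
  proof -
    have s1: "F \<ge> (\<Sum>k=1..n. 3 * (1/real k))"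
      unfolding F_def
    proof (intro sum_mono)
      fix k assume k: "k \<in> {1..n}"
      have "3 * (1/real k) = 3 * real k / (real k)^2" using k by (simp add: power2_eq_square)
      also have "\<dots> \<le> (P k)^2/(real k)^2" using Psq[of k] by (intro divide_right_mono) auto
      finally show "3 * (1/real k) \<le> (P k)^2/(real k)^2" .
    qed
    have "3 * L \<le> 3 * ln (real n + 1)" unfolding L_def using n by simp
    also have "\<dots> \<le> 3 * (\<Sum>k=1..n. 1/real k)" using harm_ln[of n] by simp
    also have "\<dots> = (\<Sum>k=1..n. 3 * (1/real k))" by (simp add: sum_distrib_left)
    also have "\<dots> \<le> F" using s1 .
    finally show ?thesis .
  qed
  have goal: "4 * (1 - 4 / (L + 4)) = 4*L/(L+4)" using L0 by (simp add: field_simps)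
  show ?thesis
  proof (rule ccontr)
    assume "\<not> ?thesis"
    hence "d < 4*L/(L+4)" using goal unfolding L_def by simp
    hence dl: "d*(L+4) < 4*L" using L0 by (simp add: field_simps)
    have d4: "d < 4"
    proof (rule ccontr)
      assume "\<not> d < 4"
      hence "4*(L+4) \<le> d*(L+4)" using L0 by (intro mult_right_mono) auto
      thus False using dl by simp
    qed
    have "(1 - d/4)*(3*L) \<le> (1-d/4)*F" using FL d4 by (intro mult_left_mono) auto
    also have "(1-d/4)*F \<le> 3*d" using ineq by (simp add: algebra_simps)
    finally have "(1 - d/4)*(3*L) \<le> 3*d" .
    hence "4*L \<le> d*(L+4)" by (simp add: algebra_simps)
    thus False using dl by simp
  qed
qed



lemma upper_bound:
  fixes n :: nat and a :: "nat \<Rightarrow> real"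
  assumes n: "n \<ge> 3"
  shows "(\<Sum>k=1..n. ((1 / real k) * (\<Sum>j=1..k. a j))^2)
     \<le> 4 * (1 - 8 / (ln (real n) + 4)^2) * (\<Sum>k=1..n. (a k)^2)"
proof -
  define L where "L = ln (real n)"
  have L0: "L \<ge> 0" unfolding L_def using n by simp
  have L4: "(L+4)^2 \<ge> 16" using mult_mono[of 4 "L+4" 4 "L+4"] L0 by (simp add: power2_eq_square)
  define S where "S = sqrt ((L+4)^2 - 8)"
  have S2: "S^2 = (L+4)^2 - 8" unfolding S_def using L4 by simp
  have S0: "S > 0" unfolding S_def using L4 by simp
  define lam where "lam = 1/4 + 2/S^2"
  define y where "y = ln (real n + 1) + 1/8"
  define t1 where "t1 = S - y"
  define t where "t k = t1 + (\<Sum>j=1..<k. 1 / sqrt (real j * (real j + 1)))" for k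
  define g where "g x = x * (2*S - x)" for x
  define h where "h k = sqrt (real k) * g (t k)" for k
  have ly: "ln (real n + 1) \<le> L + 1/3"
  proof -
    define m where "m = real n"
    have m3: "m \<ge> 3" unfolding m_def using n by simp
    have eq1: "m * (1 + 1/m) = m + 1" using m3 by (simp add: field_simps)
    have "ln (m * (1+1/m)) = ln m + ln (1+1/m)" by (rule ln_mult_pos) (use m3 in \<open>auto intro: add_pos_nonneg\<close>)
    hence l: "ln (m+1) = ln m + ln (1+1/m)" using eq1 by simp
    have "ln (1+1/m) \<le> 1/m" using m3 by (intro ln_add_one_self_le_self) simp
    also have "1/m \<le> 1/3" using m3 by simp
    finally show ?thesis using l unfolding m_def L_def by simp
  qed
  have y0: "y \<ge> 0" unfolding y_def by simp
  have yL: "y \<le> L + 11/24" unfolding y_def using ly by simp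
  have yy: "y^2 \<le> (L + 11/24)^2" using y0 yL by (intro power_mono) auto
  have "S^2 - y^2 \<ge> 7*L + 77/10" unfolding S2 using yy L0 by (simp add: power2_eq_square algebra_simps)
  hence "y^2 < S^2" using L0 by linarith
  hence yS: "y < S" using S0 y0 by (smt (verit) power_mono)
  have t1pos: "t1 > 0" unfolding t1_def using yS by simp
  have tstep: "t (Suc k) = t k + 1 / sqrt (real k * (real k + 1))" if "k \<ge> 1" for k
    unfolding t_def using that by simp
  have tge: "t k \<ge> t1" for k
    unfolding t_def by (intro add_increasing2 sum_nonneg) auto
  have tmono: "t k \<le> t m" if "k \<le> m" for k m
    unfolding t_def using that by (intro add_left_mono sum_mono2) auto
  have tend: "t (n+1) \<le> S"
  proof -
    have "t (n+1) = t1 + (\<Sum>j=1..n. 1 / sqrt (real j * (real j + 1)))"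
      unfolding t_def by (simp add: atLeastLessThanSuc_atLeastAtMost)
    also have "\<dots> \<le> t1 + (ln (real n + 1) + 1/8 - 1/(8*(real n+1)))"
      using sum_delta[of n] by simp
    also have "\<dots> \<le> S" unfolding t1_def y_def by simp
    finally show ?thesis .
  qed
  have trange: "0 < t k \<and> t k \<le> S" if "k \<le> n+1" for k
    using tge[of k] t1pos tmono[OF that] tend by simp
  have grange: "0 < g x \<and> g x \<le> S^2" if "0 < x" "x \<le> S" for x
  proof -
    have "g x = S^2 - (S-x)^2" unfolding g_def by (simp add: power2_eq_square algebra_simps)
    moreover have "(S-x)^2 < S^2" using that by (intro power_strict_mono) auto
    ultimately show ?thesis by simp
  qed
  have hpos: "h k > 0" if "1 \<le> k" "k \<le> n+1" for k
    unfolding h_def using that grange trange by simp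
  have h0: "h 0 = 0" unfolding h_def by simp
  have coef: "2 - h (k-1)/h k - h (k+1)/h k \<ge> lam/(real k)^2" if k: "1 \<le> k" "k \<le> n" for k
  proof -
    have hk: "h k > 0" using hpos k by simp
    have main: "2*h k - h (k-1) - h (k+1) \<ge> lam/(real k)^2 * h k"
    proof (cases "k = 1")
      case True
      have t2: "t (Suc (Suc 0)) = t1 + 1/sqrt 2" unfolding t_def by (simp add: numeral_2_eq_2)
      have "t 1 = t1" unfolding t_def by simp
      then show ?thesis
        using first_step[OF S0 lam_def _ y0 L0 yL S2, of t1] True t2
        unfolding h_def g_def t1_def by simp
    next
      case False
      hence k2: "k \<ge> 2" using k by simp
      define kr where "kr = real k"
      have kr1: "kr > 1" unfolding kr_def using k2 by simp
      have tm: "t (k-1) = t k - 1/sqrt((kr-1)*kr)"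
      proof -
        have "t k = t (Suc (k-1))" using k2 by simp
        also have "\<dots> = t (k-1) + 1 / sqrt (real (k-1) * (real (k-1) + 1))" using k2 by (intro tstep) simp
        finally show ?thesis unfolding kr_def using k2 by (simp add: of_nat_diff)
      qed
      have tp: "t (k+1) = t k + 1/sqrt(kr*(kr+1))" unfolding kr_def using tstep[of k] k by simp
      have gk: "0 \<le> t k*(2*S-t k)" "t k*(2*S-t k) \<le> S^2"
        using grange[of "t k"] trange[of k] k unfolding g_def by auto
      have "2*sqrt kr*(t k*(2*S-t k)) - sqrt(kr-1)*(t (k-1)*(2*S-t (k-1))) - sqrt(kr+1)*(t (k+1)*(2*S-t (k+1)))
         \<ge> lam/kr^2 * (sqrt kr * (t k*(2*S-t k)))"
        by (rule interior[OF kr1 S0 lam_def tm tp gk])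
      moreover have "real (k-1) = kr - 1" unfolding kr_def using k2 by (simp add: of_nat_diff)
      ultimately show ?thesis unfolding h_def g_def kr_def by (simp add: algebra_simps)
    qed
    have "2 - h (k-1)/h k - h (k+1)/h k = (2*h k - h (k-1) - h (k+1)) / h k"
      using hk by (simp add: field_simps)
    also have "\<dots> \<ge> (lam/(real k)^2 * h k) / h k" using main hk by (intro divide_right_mono) auto
    finally show ?thesis using hk by simp
  qed
  have hlast: "h (n+1) \<ge> h n"
  proof -
    have tn: "0 < t n" "t n \<le> t (n+1)" "t (n+1) \<le> S"
      using trange[of n] tmono[of n "n+1"] tend by auto
    have "g (t (n+1)) - g (t n) = (t (n+1) - t n) * (2*S - t n - t (n+1))"
      unfolding g_def by (simp add: algebra_simps)
    also have "\<dots> \<ge> 0" using tn by (intro mult_nonneg_nonneg) auto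
    finally have gg: "g (t n) \<le> g (t (n+1))" by simp
    have "g (t n) \<ge> 0" using grange[of "t n"] tn by simp
    hence "sqrt (real n) * g (t n) \<le> sqrt (real (n+1)) * g (t (n+1))"
      using gg by (intro mult_mono) auto
    thus ?thesis unfolding h_def .
  qed
  define b where "b k = (\<Sum>j=1..k. a j)" for k
  have b0: "b 0 = 0" unfolding b_def by simp
  have bd: "b k - b (k-1) = a k" if "k \<ge> 1" for k
  proof -
    have "k = Suc (k-1)" using that by simp
    then obtain m where "k = Suc m" by blast
    thus ?thesis unfolding b_def by simp
  qed
  note tel = telescope[of b h n, OF b0 h0 hpos]
  have G: "(\<Sum>k=1..n. (b k - b (k-1))^2) = (\<Sum>k=1..n. (a k)^2)"
    using bd by (intro sum.cong) auto
  have last: "(b n)^2 * (h (n+1)/h n - 1) \<ge> 0"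
    using hlast hpos[of n] n by (intro mult_nonneg_nonneg) (auto simp: field_simps)
  have "(\<Sum>k=1..n. (b k)^2 * (lam/(real k)^2)) \<le> (\<Sum>k=1..n. (b k)^2 * (2 - h (k-1)/h k - h (k+1)/h k))"
    using coef by (intro sum_mono mult_left_mono) auto
  hence lamF: "lam * (\<Sum>k=1..n. ((1 / real k) * b k)^2) \<le> (\<Sum>k=1..n. (a k)^2)"
    using tel G last by (simp add: sum_distrib_left power_divide power_mult_distrib mult_ac)
  define u where "u = 4 * (1 - 8 / (L + 4)^2)"
  have L4': "L + 4 > 0" using L0 by simp
  have e: "(L+4)^2 = S^2 + 8" using S2 by simp
  have e8: "S^2 + 8 > 0" by (simp add: add_nonneg_pos)
  have u': "u = 4*S^2/(S^2+8)" unfolding u_def e using e8 by (simp add: field_simps)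
  have lam': "lam = (S^2+8)/(4*S^2)" unfolding lam_def using S0 by (simp add: field_simps)
  have ul: "u * lam = 1" unfolding u' lam' using e8 S0 by simp
  have u0: "u \<ge> 0" using ul lam_def S0 by (smt (verit) mult_nonpos_nonneg zero_le_divide_iff zero_le_power2)
  have "(\<Sum>k=1..n. ((1 / real k) * b k)^2) = u * (lam * (\<Sum>k=1..n. ((1 / real k) * b k)^2))"
    using ul by (simp add: mult.assoc[symmetric])
  also have "\<dots> \<le> u * (\<Sum>k=1..n. (a k)^2)" using lamF u0 by (intro mult_left_mono) auto
  finally show ?thesis unfolding u_def L_def b_def .
qed


theorem theorem1p1:
  fixes n :: nat
  assumes "n \<ge> 3"
  shows "4 * (1 - 4 / (ln (real n) + 4)) \<le> hardy_const n
       \<and> hardy_const n \<le> 4 * (1 - 8 / (ln (real n) + 4)^2)"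
proof -
  define A where "A = hardy_admissible n"
  define u where "u = 4 * (1 - 8 / (ln (real n) + 4)^2)"
  define lo where "lo = 4 * (1 - 4 / (ln (real n) + 4))"
  have uA: "u \<in> A" unfolding A_def hardy_admissible_def u_def
    using upper_bound[OF assms] by blast
  have lowA: "lo \<le> d" if "d \<in> A" for d
    using lower_bound[OF assms] that unfolding A_def lo_def by blast
  have ne: "A \<noteq> {}" using uA by blast
  have bdd: "bdd_below A" using lowA by (intro bdd_belowI) 
  define c where "c = Inf A"
  have cA: "c \<in> A"
    unfolding A_def hardy_admissible_def mem_Collect_eq
  proof
    fix a :: "nat \<Rightarrow> real"
    define F where "F = (\<Sum>k=1..n. ((1 / real k) * (\<Sum>j=1..k. a j))^2)"
    define G where "G = (\<Sum>k=1..n. (a k)^2)"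
    have adm: "F \<le> d * G" if "d \<in> A" for d
      using that unfolding A_def hardy_admissible_def F_def G_def by blast
    have G0: "G \<ge> 0" unfolding G_def by (intro sum_nonneg) simp
    show "F \<le> c * G"
    proof (cases "G = 0")
      case True
      then show ?thesis using adm[OF uA] by simp
    next
      case False
      hence Gp: "G > 0" using G0 by simp
      have "F / G \<le> d" if "d \<in> A" for d
        using adm[OF that] Gp by (simp add: divide_le_eq mult.commute)
      hence "F / G \<le> c" unfolding c_def using ne by (intro cInf_greatest) auto
      thus ?thesis using Gp by (simp add: divide_le_eq mult.commute)
    qed
  qed
  have least: "hardy_const n = c"
    unfolding hardy_const_def A_def[symmetric]
  proof (rule Least_equality)
    show "c \<in> A" by (rule cA)
    show "\<And>y. y \<in> A \<Longrightarrow> c \<le> y" unfolding c_def using bdd by (intro cInf_lower)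
  qed
  have "lo \<le> c" using lowA[OF cA] .
  moreover have "c \<le> u" unfolding c_def using bdd uA by (intro cInf_lower)
  ultimately show ?thesis using least unfolding lo_def u_def by simp
qed

end
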